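(* Let $\mathcal{X}$ be a compact design space and, for $i=1,\dots,\nu$, let $\eta_i(x,\theta_i)$ be regression functions with parameters in compact sets $\Theta_i\subset\mathbb{R}^{d_i}$ such that (A1) each $\eta_i(\cdot,\theta_i)$ is continuously differentiable with respect to $\theta_i$, and (A2) for every design $\xi$ with $T_{\mathrm{P}}(\xi)>0$ and every pair $(i,j)$ with $p_{i,j}\neq0$, the infimum $\inf_{\theta_{i,j}\in\Theta_j}\int_{\mathcal{X}}[\eta_i(x,\overline{\theta}_i)-\eta_j(x,\theta_{i,j})]^2\xi(dx)$ is attained at a unique point $\widehat{\theta}_{i,j}(\xi)$ in the interior of $\Theta_j$. Here $p_{i,j}\ge0$ are weights, $\overline{\theta}_i\in\Theta_i$ fixed, and $T_{\mathrm{P}}(\xi)=\sum_{i,j}p_{i,j}\inf_{\theta_{i,j}\in\Theta_j}\int_{\mathcal{X}}[\eta_i(x,\overline{\theta}_i)-\eta_j(x,\theta_{i,j})]^2\xi(dx)$. Consider the algorithm: start with a design $\xi_0$ with $T_{\mathrm{P}}(\xi_0)>0$; given $\xi_s$ with support $\mathcal{S}_{[s]}$, (1) set $\mathcal{S}_{[s+1]}=\mathcal{S}_{[s]}\cup\mathcal{E}_{[s]}$ where $\mathcal{E}_{[s]}$ is the set of all local maxima of $x\mapsto\Psi(x,\xi_s)$ on $\mathcal{X}$; (2) choose weights $\omega_{[s+1]}$ maximizing $\omega\mapsto T_{\mathrm{P}}(\{\mathcal{S}_{[s+1]},\omega\})$ over probability weight vectors on $\mathcal{S}_{[s+1]}$,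 discard zero-weight points, and let $\xi_{s+1}$ be the resulting design. Then at the end of each iteration, the function $x\mapsto\Psi(x,\xi_{s+1})$ takes one and the same value at all support points of $\xi_{s+1}$.
   Context: A design is a probability measure on $\mathcal{X}$ with finite support; $\{\mathcal{S},\omega\}$ denotes the design on the finite set $\mathcal{S}$ with weight vector $\omega$. Under (A1)–(A2), for a design $\xi$ with $T_{\mathrm{P}}(\xi)>0$, $$\Psi(x,\xi)=\sum_{i,j=1}^{\nu}p_{i,j}\big[\eta_i(x,\overline{\theta}_i)-\eta_j(x,\widehat{\theta}_{i,j}(\xi))\big]^2.$$ *)

theory Defs
  imports "HOL-Analysis.Analysis"
begin

text \<open>A design on the design space X: a probability measure with finite support,
  represented by its weight function (the weight of every point).\<close>

definition supp :: "('x \<Rightarrow> real) \<Rightarrow> 'x set" where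
  "supp \<xi> = {x. \<xi> x \<noteq> 0}"

definition design :: "'x set \<Rightarrow> ('x \<Rightarrow> real) \<Rightarrow> bool" where
  "design X \<xi> \<longleftrightarrow> (\<forall>x. \<xi> x \<ge> 0) \<and> finite (supp \<xi>) \<and> supp \<xi> \<subseteq> X
      \<and> sum \<xi> (supp \<xi>) = 1"

definition loss :: "(nat \<Rightarrow> 'x \<Rightarrow> 'p \<Rightarrow> real) \<Rightarrow> (nat \<Rightarrow> 'p) \<Rightarrow> nat \<Rightarrow> nat
      \<Rightarrow> ('x \<Rightarrow> real) \<Rightarrow> 'p \<Rightarrow> real" where
  "loss \<eta> tbar i j \<xi> \<theta> = (\<Sum>x\<in>supp \<xi>. \<xi> x * (\<eta> i x (tbar i) - \<eta> j x \<theta>)\<^sup>2)"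

definition TP :: "nat \<Rightarrow> (nat \<Rightarrow> nat \<Rightarrow> real) \<Rightarrow> (nat \<Rightarrow> 'x \<Rightarrow> 'p \<Rightarrow> real)
      \<Rightarrow> (nat \<Rightarrow> 'p) \<Rightarrow> (nat \<Rightarrow> 'p set) \<Rightarrow> ('x \<Rightarrow> real) \<Rightarrow> real" where
  "TP \<nu> p \<eta> tbar \<Theta> \<xi> =
     (\<Sum>i\<in>{1..\<nu>}. \<Sum>j\<in>{1..\<nu>}. p i j * (INF \<theta>\<in>\<Theta> j. loss \<eta> tbar i j \<xi> \<theta>))"

text \<open>The (unique, under (A2)) minimiser \<open>\<theta>hat_{i,j}(\<xi>)\<close>.\<close>

definition thetahat :: "(nat \<Rightarrow> 'x \<Rightarrow> 'p \<Rightarrow> real) \<Rightarrow> (nat \<Rightarrow> 'p) \<Rightarrow> (nat \<Rightarrow> 'p set)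
      \<Rightarrow> nat \<Rightarrow> nat \<Rightarrow> ('x \<Rightarrow> real) \<Rightarrow> 'p" where
  "thetahat \<eta> tbar \<Theta> i j \<xi> =
     (THE \<theta>. \<theta> \<in> \<Theta> j \<and> loss \<eta> tbar i j \<xi> \<theta> = (INF t\<in>\<Theta> j. loss \<eta> tbar i j \<xi> t))"

definition Psi :: "nat \<Rightarrow> (nat \<Rightarrow> nat \<Rightarrow> real) \<Rightarrow> (nat \<Rightarrow> 'x \<Rightarrow> 'p \<Rightarrow> real)
      \<Rightarrow> (nat \<Rightarrow> 'p) \<Rightarrow> (nat \<Rightarrow> 'p set) \<Rightarrow> 'x \<Rightarrow> ('x \<Rightarrow> real) \<Rightarrow> real" where
  "Psi \<nu> p \<eta> tbar \<Theta> x \<xi> =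
     (\<Sum>i\<in>{1..\<nu>}. \<Sum>j\<in>{1..\<nu>}.
        p i j * (\<eta> i x (tbar i) - \<eta> j x (thetahat \<eta> tbar \<Theta> i j \<xi>))\<^sup>2)"

definition local_max_on :: "'x::topological_space set \<Rightarrow> ('x \<Rightarrow> real) \<Rightarrow> 'x \<Rightarrow> bool" where
  "local_max_on X f x \<longleftrightarrow> x \<in> X \<and> (\<exists>U. open U \<and> x \<in> U \<and> (\<forall>y\<in>U \<inter> X. f y \<le> f x))"

text \<open>Interior of a parameter set \<Theta> \<subseteq> E, where the linear subspace E (of dimension d)
  plays the role of \<open>\<real>^d\<close>: interior relative to E.\<close>

definition interior_in :: "'p::real_normed_vector set \<Rightarrow> 'p set \<Rightarrow> 'p set" where
  "interior_in E \<Theta> = {\<theta>. \<exists>U. openin (top_of_set E) U \<and> \<theta> \<in> U \<and> U \<subseteq> \<Theta>}"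

end

theory Submission
  imports Defs
begin

lemma key:
  fixes a b :: "'p::t2_space \<Rightarrow> real"
  assumes K: "compact K" and ca: "continuous_on K a" and cb: "continuous_on K b" and th: "th \<in> K"
    and mn: "\<forall>t\<in>K. a th \<le> a t" and un: "\<forall>t\<in>K. a t = a th \<longrightarrow> t = th" and e: "e > 0"
  shows "eventually (\<lambda>t. \<forall>\<theta>\<in>K. a th + t*(b th - e) \<le> a \<theta> + t * b \<theta>) (at_right 0)"
proof -
  define K' where "K' = K \<inter> b -` {..b th - e}"
  have "closed K'" unfolding K'_def
    by (rule continuous_closed_preimage[OF cb compact_imp_closed[OF K]]) auto
  hence cK': "compact K'" using K K'_def compact_Int_closed[OF K, of K'] by (metis Int_absorb1 inf_le1 K'_def)
  have out: "a th + t*(b th - e) \<le> a \<theta> + t * b \<theta>" if "t > 0" "\<theta> \<in> K" "\<theta> \<notin> K'" for t \<theta>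
  proof -
    have "b th - e \<le> b \<theta>" using that K'_def by auto
    hence "t*(b th - e) \<le> t * b \<theta>" using that by (intro mult_left_mono) auto
    moreover have "a th \<le> a \<theta>" using mn that by auto
    ultimately show ?thesis by linarith
  qed
  show ?thesis
  proof (cases "K' = {}")
    case True
    show ?thesis unfolding eventually_at_right_field
      by (rule exI[of _ 1]) (use out True in auto)
  next
    case False
    obtain t0 where t0: "t0 \<in> K'" "\<forall>y\<in>K'. a t0 \<le> a y"
      using continuous_attains_inf[OF cK' False continuous_on_subset[OF ca]] K'_def by auto
    obtain bm where bm: "\<forall>y\<in>K. b bm \<le> b y" "bm \<in> K"
      using continuous_attains_inf[OF K _ cb] th by auto
    have "t0 \<noteq> th" using t0 e K'_def by auto
    hence g: "a t0 - a th > 0" using un mn t0 K'_def by force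
    define \<gamma> where "\<gamma> = a t0 - a th"
    define d where "d = \<gamma> / (\<bar>b th - e - b bm\<bar> + 1)"
    have dpos: "d > 0" using g \<gamma>_def d_def by auto
    show ?thesis unfolding eventually_at_right_field
    proof (rule exI[of _ d], intro conjI allI impI ballI)
      show "d > 0" by fact
      fix t \<theta> assume t: "t > 0" "t < d" and \<theta>: "\<theta> \<in> K"
      show "a th + t*(b th - e) \<le> a \<theta> + t * b \<theta>"
      proof (cases "\<theta> \<in> K'")
        case True
        have "t * (\<bar>b th - e - b bm\<bar> + 1) < d * (\<bar>b th - e - b bm\<bar> + 1)"
          using t by (intro mult_strict_right_mono) auto
        also have "\<dots> = \<gamma>" unfolding d_def by simp
        finally have h1: "t * (\<bar>b th - e - b bm\<bar> + 1) < \<gamma>" .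
        have "t * (b th - e - b bm) \<le> t * (\<bar>b th - e - b bm\<bar> + 1)"
          using t by (intro mult_left_mono) auto
        hence h2: "t * (b th - e - b bm) < \<gamma>" using h1 by linarith
        have h3: "t * b bm \<le> t * b \<theta>" using bm \<theta> t by (intro mult_left_mono) auto
        have h4: "a t0 \<le> a \<theta>" using t0 True by auto
        show ?thesis using h2 h3 h4 unfolding \<gamma>_def by (simp add: algebra_simps)
      next
        case False thus ?thesis using out t \<theta> by auto
      qed
    qed
  qed
qed
theorem lemma3p2:
  fixes X :: "'x::topological_space set"
    and \<nu> :: nat
    and E :: "nat \<Rightarrow> 'p::euclidean_space set"
    and \<Theta> :: "nat \<Rightarrow> 'p set"
    and \<eta> :: "nat \<Rightarrow> 'x \<Rightarrow> 'p \<Rightarrow> real"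
    and tbar :: "nat \<Rightarrow> 'p"
    and p :: "nat \<Rightarrow> nat \<Rightarrow> real"
    and \<xi> :: "nat \<Rightarrow> 'x \<Rightarrow> real"
  assumes X_compact: "compact X"
    and nu_pos: "\<nu> \<ge> 1"
    and E_subspace: "\<And>i. i \<in> {1..\<nu>} \<Longrightarrow> subspace (E i)"
    and Theta_compact: "\<And>i. i \<in> {1..\<nu>} \<Longrightarrow> compact (\<Theta> i)"
    and Theta_sub: "\<And>i. i \<in> {1..\<nu>} \<Longrightarrow> \<Theta> i \<subseteq> E i"
    and tbar_in: "\<And>i. i \<in> {1..\<nu>} \<Longrightarrow> tbar i \<in> \<Theta> i"
    and p_nonneg: "\<And>i j. i \<in> {1..\<nu>} \<Longrightarrow> j \<in> {1..\<nu>} \<Longrightarrow> p i j \<ge> 0"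
    and A1: "\<And>i x. i \<in> {1..\<nu>} \<Longrightarrow> x \<in> X \<Longrightarrow>
              \<exists>U D. openin (top_of_set (E i)) U \<and> \<Theta> i \<subseteq> U \<and>
                 (\<forall>\<theta>\<in>U. (\<eta> i x has_derivative blinfun_apply (D \<theta>)) (at \<theta> within E i)) \<and>
                 continuous_on U D"
    and A2: "\<And>\<zeta> i j. design X \<zeta> \<Longrightarrow> TP \<nu> p \<eta> tbar \<Theta> \<zeta> > 0 \<Longrightarrow>
              i \<in> {1..\<nu>} \<Longrightarrow> j \<in> {1..\<nu>} \<Longrightarrow> p i j \<noteq> 0 \<Longrightarrow>
              \<exists>th. th \<in> \<Theta> j
                 \<and> loss \<eta> tbar i j \<zeta> th = (INF t\<in>\<Theta> j. loss \<eta> tbar i j \<zeta> t)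
                 \<and> (\<forall>t\<in>\<Theta> j. loss \<eta> tbar i j \<zeta> t = (INF t\<in>\<Theta> j. loss \<eta> tbar i j \<zeta> t) \<longrightarrow> t = th)
                 \<and> th \<in> interior_in (E j) (\<Theta> j)"
    and start: "design X (\<xi> 0)" "TP \<nu> p \<eta> tbar \<Theta> (\<xi> 0) > 0"
    and step: "\<And>s. supp (\<xi> (Suc s)) \<subseteq>
                  supp (\<xi> s) \<union> {x. local_max_on X (\<lambda>y. Psi \<nu> p \<eta> tbar \<Theta> y (\<xi> s)) x}
               \<and> design X (\<xi> (Suc s))
               \<and> (\<forall>\<omega>. design X \<omega> \<and> supp \<omega> \<subseteq>
                      supp (\<xi> s) \<union> {x. local_max_on X (\<lambda>y. Psi \<nu> p \<eta> tbar \<Theta> y (\<xi> s)) x}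
                    \<longrightarrow> TP \<nu> p \<eta> tbar \<Theta> \<omega> \<le> TP \<nu> p \<eta> tbar \<Theta> (\<xi> (Suc s)))"
  shows "\<exists>c. \<forall>x\<in>supp (\<xi> (Suc s)). Psi \<nu> p \<eta> tbar \<Theta> x (\<xi> (Suc s)) = c"
proof -
  let ?TP = "TP \<nu> p \<eta> tbar \<Theta>"
  let ?Psi = "\<lambda>x \<zeta>. Psi \<nu> p \<eta> tbar \<Theta> x \<zeta>"
  have desn: "design X (\<xi> n) \<and> ?TP (\<xi> n) \<ge> ?TP (\<xi> 0)" for n
  proof (induction n)
    case 0 show ?case using start by simp
  next
    case (Suc n)
    have "?TP (\<xi> n) \<le> ?TP (\<xi> (Suc n))" using step[of n] Suc by blast
    thus ?case using step[of n] Suc by auto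
  qed
  define \<xi>' where "\<xi>' = \<xi> (Suc s)"
  define S where "S = supp \<xi>'"
  define C where "C = supp (\<xi> s) \<union> {x. local_max_on X (\<lambda>y. Psi \<nu> p \<eta> tbar \<Theta> y (\<xi> s)) x}"
  have des: "design X \<xi>'" and SC: "S \<subseteq> C" and opt: "\<And>\<omega>. design X \<omega> \<Longrightarrow> supp \<omega> \<subseteq> C \<Longrightarrow> ?TP \<omega> \<le> ?TP \<xi>'"
    using step[of s] unfolding \<xi>'_def S_def C_def by auto
  have TPpos: "?TP \<xi>' > 0" using desn[of "Suc s"] start unfolding \<xi>'_def by auto
  have finS: "finite S" and SX: "S \<subseteq> X" and nn: "\<And>z. \<xi>' z \<ge> 0" and sum1: "sum \<xi>' S = 1"
    using des unfolding design_def S_def by auto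
  have cont: "continuous_on (\<Theta> j) (\<eta> j z)" if j: "j \<in> {1..\<nu>}" and z: "z \<in> X" for j z
  proof -
    obtain U D where UD: "\<Theta> j \<subseteq> U" "\<forall>\<theta>\<in>U. (\<eta> j z has_derivative blinfun_apply (D \<theta>)) (at \<theta> within E j)"
      using A1[OF j z] by blast
    show ?thesis unfolding continuous_on_eq_continuous_within
    proof
      fix \<theta> assume "\<theta> \<in> \<Theta> j"
      hence "continuous (at \<theta> within E j) (\<eta> j z)" using UD has_derivative_continuous by blast
      thus "continuous (at \<theta> within \<Theta> j) (\<eta> j z)"
        using continuous_within_subset Theta_sub[OF j] by blast
    qed
  qed
  have le: "?Psi x \<xi>' \<le> ?Psi y \<xi>'" if x: "x \<in> S" and y: "y \<in> S" for x y
  proof (cases "x = y")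
    case True thus ?thesis by simp
  next
    case xy: False
    define sq where "sq i j z \<theta> = (\<eta> i z (tbar i) - \<eta> j z \<theta>)\<^sup>2" for i j z \<theta>
    define th where "th i j = thetahat \<eta> tbar \<Theta> i j \<xi>'" for i j
    define c where "c i j = sq i j x (th i j) - sq i j y (th i j)" for i j
    have Psi_diff: "?Psi x \<xi>' - ?Psi y \<xi>' = (\<Sum>i\<in>{1..\<nu>}. \<Sum>j\<in>{1..\<nu>}. p i j * c i j)"
      by (simp add: Psi_def c_def sq_def th_def sum_subtractf[symmetric] right_diff_distrib)
    define \<omega> where "\<omega> t = (\<lambda>z. \<xi>' z + (if z = x then t else 0) - (if z = y then t else 0))" for t :: real
    have supp\<omega>: "supp (\<omega> t) \<subseteq> S" for t
      using x y unfolding supp_def \<omega>_def S_def by auto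
    have lossS: "loss \<eta> tbar i j w \<theta> = (\<Sum>z\<in>S. w z * sq i j z \<theta>)" if "supp w \<subseteq> S" for w i j \<theta>
      unfolding loss_def sq_def
      by (rule sum.mono_neutral_left[OF finS that]) (auto simp: supp_def)
    have loss\<omega>: "loss \<eta> tbar i j (\<omega> t) \<theta> = loss \<eta> tbar i j \<xi>' \<theta> + t * (sq i j x \<theta> - sq i j y \<theta>)" for i j t \<theta>
    proof -
      have "loss \<eta> tbar i j (\<omega> t) \<theta> = (\<Sum>z\<in>S. \<xi>' z * sq i j z \<theta> + ((if z = x then t * sq i j z \<theta> else 0) - (if z = y then t * sq i j z \<theta> else 0)))"
        unfolding lossS[OF supp\<omega>] by (intro sum.cong) (auto simp: \<omega>_def algebra_simps)
      also have "\<dots> = (\<Sum>z\<in>S. \<xi>' z * sq i j z \<theta>) + (t * sq i j x \<theta> - t * sq i j y \<theta>)"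
        using x y finS by (simp add: sum.distrib sum_subtractf)
      also have "(\<Sum>z\<in>S. \<xi>' z * sq i j z \<theta>) = loss \<eta> tbar i j \<xi>' \<theta>"
        using lossS[of \<xi>'] S_def by simp
      finally show ?thesis by (simp add: algebra_simps)
    qed
    have ypos: "\<xi>' y > 0" using y nn[of y] unfolding S_def supp_def by force
    have des\<omega>: "design X (\<omega> t)" if "0 < t" "t \<le> \<xi>' y" for t
    proof -
      have "\<forall>z. \<omega> t z \<ge> 0" using that nn xy unfolding \<omega>_def by (auto simp: add_nonneg_nonneg)
      moreover have "finite (supp (\<omega> t))" using supp\<omega> finS finite_subset by blast
      moreover have "supp (\<omega> t) \<subseteq> X" using supp\<omega> SX by blast
      moreover have "sum (\<omega> t) (supp (\<omega> t)) = sum (\<omega> t) S"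
        by (rule sum.mono_neutral_left[OF finS supp\<omega>]) (auto simp: supp_def)
      moreover have "sum (\<omega> t) S = 1"
        using x y finS sum1 by (simp add: \<omega>_def sum.distrib sum_subtractf)
      ultimately show ?thesis unfolding design_def by simp
    qed
    have TP\<omega>: "?TP (\<omega> t) \<le> ?TP \<xi>'" if "0 < t" "t \<le> \<xi>' y" for t
      using opt[OF des\<omega>[OF that]] supp\<omega> SC by blast
    have pairs: "th i j \<in> \<Theta> j \<and> (\<forall>t\<in>\<Theta> j. loss \<eta> tbar i j \<xi>' (th i j) \<le> loss \<eta> tbar i j \<xi>' t)
        \<and> (\<forall>t\<in>\<Theta> j. loss \<eta> tbar i j \<xi>' t = loss \<eta> tbar i j \<xi>' (th i j) \<longrightarrow> t = th i j)
        \<and> loss \<eta> tbar i j \<xi>' (th i j) = (INF t\<in>\<Theta> j. loss \<eta> tbar i j \<xi>' t)"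
      if ij: "i \<in> {1..\<nu>}" "j \<in> {1..\<nu>}" "p i j \<noteq> 0" for i j
    proof -
      from A2[OF des TPpos ij] obtain t0 where t0all: "t0 \<in> \<Theta> j
                 \<and> loss \<eta> tbar i j \<xi>' t0 = (INF t\<in>\<Theta> j. loss \<eta> tbar i j \<xi>' t)
                 \<and> (\<forall>t\<in>\<Theta> j. loss \<eta> tbar i j \<xi>' t = (INF t\<in>\<Theta> j. loss \<eta> tbar i j \<xi>' t) \<longrightarrow> t = t0)
                 \<and> t0 \<in> interior_in (E j) (\<Theta> j)" ..
      have t01: "t0 \<in> \<Theta> j" and t02: "loss \<eta> tbar i j \<xi>' t0 = (INF t\<in>\<Theta> j. loss \<eta> tbar i j \<xi>' t)"
        and t03: "\<forall>t\<in>\<Theta> j. loss \<eta> tbar i j \<xi>' t = (INF t\<in>\<Theta> j. loss \<eta> tbar i j \<xi>' t) \<longrightarrow> t = t0"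
        using t0all by simp_all
      have eqth: "th i j = t0" unfolding th_def thetahat_def
      proof (rule the_equality)
        show "t0 \<in> \<Theta> j \<and> loss \<eta> tbar i j \<xi>' t0 = (INF t\<in>\<Theta> j. loss \<eta> tbar i j \<xi>' t)"
          using t01 t02 by simp
        fix t assume "t \<in> \<Theta> j \<and> loss \<eta> tbar i j \<xi>' t = (INF t\<in>\<Theta> j. loss \<eta> tbar i j \<xi>' t)"
        thus "t = t0" using t03 by blast
      qed
      have bdd: "bdd_below ((loss \<eta> tbar i j \<xi>') ` \<Theta> j)"
        by (rule bdd_belowI[of _ 0]) (auto simp: loss_def supp_def intro!: sum_nonneg mult_nonneg_nonneg nn)
      have lo: "\<forall>t\<in>\<Theta> j. loss \<eta> tbar i j \<xi>' t0 \<le> loss \<eta> tbar i j \<xi>' t"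
        unfolding t02 using bdd by (auto intro: cINF_lower)
      have un: "\<forall>t\<in>\<Theta> j. loss \<eta> tbar i j \<xi>' t = loss \<eta> tbar i j \<xi>' t0 \<longrightarrow> t = t0"
        using t03 t02 by simp
      show ?thesis unfolding eqth using t01 t02 lo un by blast
    qed
    have ev: "eventually (\<lambda>t. \<forall>i\<in>{1..\<nu>}. \<forall>j\<in>{1..\<nu>}. p i j \<noteq> 0 \<longrightarrow>
          (\<forall>\<theta>\<in>\<Theta> j. loss \<eta> tbar i j \<xi>' (th i j) + t*(c i j - e) \<le> loss \<eta> tbar i j \<xi>' \<theta> + t*(sq i j x \<theta> - sq i j y \<theta>))) (at_right 0)"
      if e: "e > 0" for e
    proof (intro eventually_ball_finite ballI finite_atLeastAtMost)
      fix i j assume ij: "i \<in> {1..\<nu>}" "j \<in> {1..\<nu>}"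
      show "eventually (\<lambda>t. p i j \<noteq> 0 \<longrightarrow>
          (\<forall>\<theta>\<in>\<Theta> j. loss \<eta> tbar i j \<xi>' (th i j) + t*(c i j - e) \<le> loss \<eta> tbar i j \<xi>' \<theta> + t*(sq i j x \<theta> - sq i j y \<theta>))) (at_right 0)"
      proof (cases "p i j = 0")
        case True thus ?thesis by simp
      next
        case False
        have ca: "continuous_on (\<Theta> j) (loss \<eta> tbar i j \<xi>')"
          unfolding loss_def S_def[symmetric]
        proof (intro continuous_on_sum continuous_on_mult continuous_on_const continuous_on_power continuous_on_diff)
          fix z assume "z \<in> S"
          thus "continuous_on (\<Theta> j) (\<eta> j z)" using cont[OF ij(2)] SX by blast
        qed
        have cb: "continuous_on (\<Theta> j) (\<lambda>\<theta>. sq i j x \<theta> - sq i j y \<theta>)"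
        proof -
          have cq: "continuous_on (\<Theta> j) (sq i j z)" if z: "z \<in> X" for z
          proof -
            have c1: "continuous_on (\<Theta> j) (\<eta> j z)" using cont[OF ij(2) z] .
            have "continuous_on (\<Theta> j) (\<lambda>\<theta>. \<eta> i z (tbar i) - \<eta> j z \<theta>)"
              by (rule continuous_on_diff[OF continuous_on_const c1])
            hence "continuous_on (\<Theta> j) (\<lambda>\<theta>. (\<eta> i z (tbar i) - \<eta> j z \<theta>)\<^sup>2)"
              by (rule continuous_on_power)
            thus ?thesis unfolding sq_def .
          qed
          have "x \<in> X" "y \<in> X" using SX x y by auto
          thus ?thesis using continuous_on_diff[OF cq cq] by blast
        qed
        have "eventually (\<lambda>t. \<forall>\<theta>\<in>\<Theta> j. loss \<eta> tbar i j \<xi>' (th i j) + t*((sq i j x (th i j) - sq i j y (th i j)) - e) \<le> loss \<eta> tbar i j \<xi>' \<theta> + t*(sq i j x \<theta> - sq i j y \<theta>)) (at_right 0)"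
        proof -
          note pr = pairs[OF ij False]
          have p1: "th i j \<in> \<Theta> j" using pr by (rule conjunct1)
          have p2: "\<forall>t\<in>\<Theta> j. loss \<eta> tbar i j \<xi>' (th i j) \<le> loss \<eta> tbar i j \<xi>' t"
            using pr[THEN conjunct2] by (rule conjunct1)
          have p3: "\<forall>t\<in>\<Theta> j. loss \<eta> tbar i j \<xi>' t = loss \<eta> tbar i j \<xi>' (th i j) \<longrightarrow> t = th i j"
            using pr[THEN conjunct2, THEN conjunct2] by (rule conjunct1)
          show ?thesis by (rule key[OF Theta_compact[OF ij(2)] ca cb p1 p2 p3 e])
        qed
        thus ?thesis unfolding c_def by (rule eventually_mono) simp
      qed
    qed
    let ?P = "\<Sum>i\<in>{1..\<nu>}. \<Sum>j\<in>{1..\<nu>}. p i j"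
    let ?D = "\<Sum>i\<in>{1..\<nu>}. \<Sum>j\<in>{1..\<nu>}. p i j * c i j"
    have Pnn: "?P \<ge> 0" using p_nonneg by (intro sum_nonneg) auto
    have bound: "?D \<le> e * ?P" if e: "e > 0" for e
    proof -
      have ev1: "eventually (\<lambda>t. t < \<xi>' y) (at_right 0)"
        unfolding eventually_at_right_field using ypos by blast
      have "eventually (\<lambda>t. t < \<xi>' y \<and> (\<forall>i\<in>{1..\<nu>}. \<forall>j\<in>{1..\<nu>}. p i j \<noteq> 0 \<longrightarrow>
          (\<forall>\<theta>\<in>\<Theta> j. loss \<eta> tbar i j \<xi>' (th i j) + t*(c i j - e) \<le> loss \<eta> tbar i j \<xi>' \<theta> + t*(sq i j x \<theta> - sq i j y \<theta>)))) (at_right 0)"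
        by (rule eventually_conj[OF ev1 ev[OF e]])
      then obtain b where b: "b > 0" "\<forall>t>0. t < b \<longrightarrow> t < \<xi>' y \<and> (\<forall>i\<in>{1..\<nu>}. \<forall>j\<in>{1..\<nu>}. p i j \<noteq> 0 \<longrightarrow>
          (\<forall>\<theta>\<in>\<Theta> j. loss \<eta> tbar i j \<xi>' (th i j) + t*(c i j - e) \<le> loss \<eta> tbar i j \<xi>' \<theta> + t*(sq i j x \<theta> - sq i j y \<theta>)))"
        unfolding eventually_at_right_field by blast
      define t where "t = b / 2"
      have t: "t > 0" "t < b" using b t_def by auto
      note tb = b(2)[rule_format, OF t]
      have trm: "p i j * ((INF \<theta>\<in>\<Theta> j. loss \<eta> tbar i j \<xi>' \<theta>) + t * (c i j - e)) \<le> p i j * (INF \<theta>\<in>\<Theta> j. loss \<eta> tbar i j (\<omega> t) \<theta>)"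
        if ij: "i \<in> {1..\<nu>}" "j \<in> {1..\<nu>}" for i j
      proof (cases "p i j = 0")
        case True thus ?thesis by simp
      next
        case False
        note pr = pairs[OF ij False]
        have "(INF \<theta>\<in>\<Theta> j. loss \<eta> tbar i j \<xi>' \<theta>) + t * (c i j - e) \<le> (INF \<theta>\<in>\<Theta> j. loss \<eta> tbar i j (\<omega> t) \<theta>)"
        proof (rule cINF_greatest)
          have p1: "th i j \<in> \<Theta> j" using pr by (rule conjunct1)
          have p4: "loss \<eta> tbar i j \<xi>' (th i j) = (INF t\<in>\<Theta> j. loss \<eta> tbar i j \<xi>' t)"
            using pr[THEN conjunct2, THEN conjunct2] by (rule conjunct2)
          show "\<Theta> j \<noteq> {}" using p1 by blast
          fix \<theta> assume th: "\<theta> \<in> \<Theta> j"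
          have q: "loss \<eta> tbar i j \<xi>' (th i j) + t*(c i j - e) \<le> loss \<eta> tbar i j \<xi>' \<theta> + t*(sq i j x \<theta> - sq i j y \<theta>)"
            using tb ij False th by blast
          show "(INF \<theta>\<in>\<Theta> j. loss \<eta> tbar i j \<xi>' \<theta>) + t * (c i j - e) \<le> loss \<eta> tbar i j (\<omega> t) \<theta>"
            unfolding loss\<omega> using q p4 by simp
        qed
        thus ?thesis using p_nonneg[OF ij] by (rule mult_left_mono)
      qed
      have "(\<Sum>i\<in>{1..\<nu>}. \<Sum>j\<in>{1..\<nu>}. p i j * ((INF \<theta>\<in>\<Theta> j. loss \<eta> tbar i j \<xi>' \<theta>) + t * (c i j - e)))
          \<le> ?TP (\<omega> t)"
        unfolding TP_def by (intro sum_mono trm) auto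
      also have "\<dots> \<le> ?TP \<xi>'" using TP\<omega> t tb by auto
      also have "?TP \<xi>' = (\<Sum>i\<in>{1..\<nu>}. \<Sum>j\<in>{1..\<nu>}. p i j * (INF \<theta>\<in>\<Theta> j. loss \<eta> tbar i j \<xi>' \<theta>))"
        unfolding TP_def ..
      finally have le1: "(\<Sum>i\<in>{1..\<nu>}. \<Sum>j\<in>{1..\<nu>}. p i j * ((INF \<theta>\<in>\<Theta> j. loss \<eta> tbar i j \<xi>' \<theta>) + t * (c i j - e)))
          \<le> (\<Sum>i\<in>{1..\<nu>}. \<Sum>j\<in>{1..\<nu>}. p i j * (INF \<theta>\<in>\<Theta> j. loss \<eta> tbar i j \<xi>' \<theta>))" .
      have eq: "(\<Sum>i\<in>{1..\<nu>}. \<Sum>j\<in>{1..\<nu>}. p i j * ((INF \<theta>\<in>\<Theta> j. loss \<eta> tbar i j \<xi>' \<theta>) + t * (c i j - e)))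
          = (\<Sum>i\<in>{1..\<nu>}. \<Sum>j\<in>{1..\<nu>}. p i j * (INF \<theta>\<in>\<Theta> j. loss \<eta> tbar i j \<xi>' \<theta>))
            + t * (\<Sum>i\<in>{1..\<nu>}. \<Sum>j\<in>{1..\<nu>}. p i j * (c i j - e))"
        unfolding sum_distrib_left sum.distrib[symmetric] by (intro sum.cong refl) (simp add: algebra_simps)
      have "t * (\<Sum>i\<in>{1..\<nu>}. \<Sum>j\<in>{1..\<nu>}. p i j * (c i j - e)) \<le> 0"
        using le1 unfolding eq by linarith
      hence "(\<Sum>i\<in>{1..\<nu>}. \<Sum>j\<in>{1..\<nu>}. p i j * (c i j - e)) \<le> 0"
        using t by (simp add: mult_le_0_iff)
      thus ?thesis by (simp add: algebra_simps sum_subtractf sum_distrib_left)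
    qed
    have "?D \<le> 0"
    proof (rule ccontr)
      assume "\<not> ?D \<le> 0"
      hence D: "?D > 0" by simp
      have "?D \<le> (?D / (?P + 1)) * ?P" using bound[of "?D / (?P + 1)"] D Pnn by auto
      also have "\<dots> < ?D" using D Pnn by (simp add: field_simps)
      finally show False by simp
    qed
    thus ?thesis using Psi_diff by simp
  qed
  show ?thesis
  proof (cases "supp (\<xi> (Suc s)) = {}")
    case True thus ?thesis by auto
  next
    case False
    then obtain x0 where x0: "x0 \<in> S" unfolding S_def \<xi>'_def by auto
    show ?thesis
    proof (rule exI[of _ "?Psi x0 \<xi>'"], rule ballI)
      fix z assume "z \<in> supp (\<xi> (Suc s))"
      hence z: "z \<in> S" unfolding S_def \<xi>'_def .
      have "?Psi z \<xi>' = ?Psi x0 \<xi>'" using le[OF z x0] le[OF x0 z] by (rule order_antisym)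
      thus "?Psi z (\<xi> (Suc s)) = ?Psi x0 \<xi>'" unfolding \<xi>'_def .
    qed
  qed
qed

end
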